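(* Let $n\ge 2$, $V_n=[n]$, and let $K_n=(V_n,E_n)$ be the complete graph. Let $1\le k\le\lfloor n/2\rfloor$. Then there exists a family $T_k$ of $k$-element subsets of $V_n$ with \[|T_k|\le (1+k\ln(n))\,2^{-k}\binom{n}{k}\] such that for every matching $M\subset E_n$ with $|M|=k$ there exists $X\in T_k$ with $\delta(X)\cap M=M$, i.e. $M\subset E(X,V_n\setminus X)$ (every edge of $M$ has exactly one endpoint in $X$).
   Context: For $X\subset V_n$, $\delta(X)$ denotes the set of edges with exactly one endpoint in $X$, and $E(X,V_n\setminus X)$ the set of edges joining $X$ to its complement. A matching is a set of pairwise disjoint edges. *)

theory Defs
  imports Complex_Main
begin

definition V :: "nat \<Rightarrow> nat set" where
  "V n = {1..n}"

definition E :: "nat \<Rightarrow> nat set set" where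
  "E n = {e. e \<subseteq> V n \<and> card e = 2}"

definition is_matching :: "nat set set \<Rightarrow> bool" where
  "is_matching M \<longleftrightarrow> (\<forall>e\<in>M. \<forall>f\<in>M. e \<noteq> f \<longrightarrow> e \<inter> f = {})"

definition delta :: "nat \<Rightarrow> nat set \<Rightarrow> nat set set" where
  "delta n X = {e \<in> E n. card (e \<inter> X) = 1}"

end

theory Submission imports Defs "HOL-Library.FuncSet" begin

lemma card_swap:
  assumes "finite A" "finite B"
  shows "(\<Sum>a\<in>A. card {b\<in>B. R a b}) = (\<Sum>b\<in>B. card {a\<in>A. R a b})"
proof -
  have "\<And>a. card {b\<in>B. R a b} = (\<Sum>b\<in>B. if R a b then 1 else 0)"
    using assms by (simp add: sum.inter_filter[symmetric])
  moreover have "\<And>b. card {a\<in>A. R a b} = (\<Sum>a\<in>A. if R a b then 1 else 0)"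
    using assms by (simp add: sum.inter_filter[symmetric])
  ultimately show ?thesis by (simp add: sum.swap[of _ A B])
qed

definition hh :: "real \<Rightarrow> real \<Rightarrow> real" where
  "hh r u = (if u \<le> 1/r then u else (1 + ln (r*u))/r)"

lemma hh_le_id: assumes "r > 0" shows "hh r u \<le> u"
proof (cases "u \<le> 1/r")
  case False
  then have ru: "r*u > 1" using assms by (simp add: field_simps)
  have "ln (r*u) \<le> r*u - 1" using ru by (intro ln_le_minus_one) auto
  then have "1 + ln (r*u) \<le> r * u" by simp
  then show ?thesis using False assms by (simp add: hh_def field_simps)
qed (simp add: hh_def)

lemma hh_mono: assumes "r > 0" "a \<le> b" shows "hh r a \<le> hh r b"
proof -
  consider "b \<le> 1/r" | "a \<le> 1/r" "b > 1/r" | "a > 1/r" by (metis assms(2) linorder_not_le order.trans)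
  then show ?thesis
  proof cases
    case 1 then show ?thesis using assms by (simp add: hh_def)
  next
    case 2
    then have "r*b > 1" using assms by (simp add: field_simps)
    then have "ln (r*b) > 0" by simp
    then have "1/r \<le> (1 + ln (r*b))/r" using assms by (simp add: divide_right_mono)
    then show ?thesis using 2 by (simp add: hh_def)
  next
    case 3
    then have "r*a > 1" using assms by (simp add: field_simps)
    moreover have "r*a \<le> r*b" using assms by simp
    ultimately have "ln (r*a) \<le> ln (r*b)" by simp
    then show ?thesis using 3 assms by (simp add: hh_def divide_right_mono)
  qed
qed

lemma ln_ge: fixes y :: real assumes "y > 0" shows "1 - 1/y \<le> ln y"
proof -
  have "ln (1/y) \<le> 1/y - 1" using ln_le_minus_one[of "1/y"] assms by simp
  then show ?thesis using assms by (simp add: ln_div)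
qed


lemma hh_step:
  assumes r: "r > 0" and u: "u > 0" and v0: "v \<ge> 0" and v1: "v \<le> u - 1" and v2: "v \<le> u - r*u"
  shows "1 + hh r v \<le> hh r u"
proof (cases "u \<le> 1/r")
  case True
  have "hh r u = u" using True by (simp add: hh_def)
  then show ?thesis using hh_le_id[OF r, of v] v1 by linarith
next
  case False
  define y where "y = r*u"
  have "1/r < u" using False by simp
  then have y1: "y > 1" using r unfolding y_def by (simp add: divide_less_eq mult.commute)
  define w where "w = u - y"
  have w0: "w \<ge> 0" using v0 v2 w_def y_def by simp
  have r1: "r \<le> 1"
  proof (rule ccontr)
    assume "\<not> r \<le> 1"
    then have "r*u > 1*u" using u by (intro mult_strict_right_mono) auto
    then show False using w0 w_def y_def by simp
  qed
  have hu: "hh r u = (1 + ln y)/r" using False by (simp add: hh_def y_def)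
  have "hh r v \<le> hh r w" using hh_mono[OF r] v2 w_def y_def by simp
  moreover have "1 + hh r w \<le> (1 + ln y)/r"
  proof (cases "w \<le> 1/r")
    case True
    have hw: "hh r w = w" using True by (simp add: hh_def)
    have "r * w \<le> 1" using True r by (simp add: le_divide_eq mult.commute)
    then have ry: "r * u - r * y \<le> 1" unfolding w_def by (simp add: right_diff_distrib)
    have "1 - 1/y \<le> ln y" using ln_ge y1 by simp
    then have lny: "y - 1 \<le> y * ln y" using y1 by (simp add: field_simps)
    have "r * y \<ge> y - 1" using ry y_def by simp
    then have ryy: "(y - 1) * (y - 1) \<le> r * y * (y - 1)" using y1 by (intro mult_right_mono) auto
    have key: "y * (r + y - r*y) \<le> y * (1 + ln y)"
      using lny ryy by (simp add: algebra_simps)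
    have "r + y - r*y \<le> 1 + ln y" using mult_left_le_imp_le[OF key] y1 by simp
    then have "r * (1 + w) \<le> 1 + ln y" unfolding w_def using y_def by (simp add: algebra_simps)
    then have "1 + w \<le> (1 + ln y)/r" using r by (simp add: le_divide_eq mult.commute)
    then show ?thesis using hw by simp
  next
    case False
    then have "1/r < w" by simp
    then have rw: "r*w > 1" using r by (simp add: divide_less_eq mult.commute)
    have rwe: "r * w = y * (1 - r)" unfolding w_def y_def by (simp add: algebra_simps)
    have r1': "r < 1"
    proof (rule ccontr)
      assume "\<not> r < 1" then have "r = 1" using r1 by simp
      then show False using rw rwe by simp
    qed
    have "ln (r*w) = ln y + ln (1 - r)" using rwe y1 r1' by (simp add: ln_mult)
    moreover have "ln (1 - r) \<le> - r" using ln_le_minus_one[of "1-r"] r1' by simp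
    ultimately have "1 + ln (r*w) \<le> 1 + ln y - r" by simp
    then have "(1 + ln (r*w))/r \<le> (1 + ln y - r)/r" using r by (simp add: divide_right_mono)
    also have "\<dots> = (1 + ln y)/r - 1" using r by (simp add: diff_divide_distrib)
    finally have "(1 + ln (r*w))/r \<le> (1 + ln y)/r - 1" .
    moreover have "hh r w = (1 + ln (r*w))/r" using False by (simp add: hh_def)
    ultimately show ?thesis by simp
  qed
  ultimately show ?thesis using hu by simp
qed


lemma cover:
  fixes C :: "'a set" and cov :: "'a \<Rightarrow> 'b \<Rightarrow> bool" and d :: real
  assumes C: "finite C" "C \<noteq> {}" and d: "d > 0"
    and deg: "\<forall>x\<in>U. d \<le> real (card {X\<in>C. cov X x})" and U: "finite U"
  shows "\<exists>T\<subseteq>C. real (card T) \<le> hh (d / real (card C)) (real (card U)) \<and> (\<forall>x\<in>U. \<exists>X\<in>T. cov X x)"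
  using deg U
proof (induction "card U" arbitrary: U rule: less_induct)
  case less
  define r where "r = d / real (card C)"
  have cC: "card C > 0" using C by (simp add: card_gt_0_iff)
  have r: "r > 0" using d cC by (simp add: r_def)
  show ?case
  proof (cases "U = {}")
    case True
    then show ?thesis using d by (intro exI[of _ "{}"]) (simp add: hh_def)
  next
    case False
    define f where "f Y = card {x\<in>U. cov Y x}" for Y
    have finf: "finite (f ` C)" using C(1) by simp
    have "Max (f ` C) \<in> f ` C" using finf C(2) by (intro Max_in) auto
    then obtain X where X0: "X \<in> C" "f X = Max (f ` C)" by auto
    have X: "X \<in> C" "\<forall>Y\<in>C. f Y \<le> f X" using X0 finf by auto
    obtain x0 where x0: "x0 \<in> U" using False by auto
    have "d \<le> real (card {X\<in>C. cov X x0})" using less.prems x0 by auto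
    then have "card {X\<in>C. cov X x0} \<noteq> 0" using d by auto
    then have "{X\<in>C. cov X x0} \<noteq> {}" by (intro notI) simp
    then obtain Y where Y: "Y \<in> C" "cov Y x0" by auto
    have "{x\<in>U. cov Y x} \<noteq> {}" using Y x0 by auto
    moreover have "finite {x\<in>U. cov Y x}" using less.prems(2) by simp
    ultimately have "card {x\<in>U. cov Y x} > 0" by (simp add: card_gt_0_iff)
    then have "f Y \<ge> 1" unfolding f_def by simp
    then have fX1: "f X \<ge> 1" using X Y by (meson le_trans)
    have "(\<Sum>Y\<in>C. f Y) = (\<Sum>x\<in>U. card {Y\<in>C. cov Y x})"
      unfolding f_def using card_swap[OF C(1) less.prems(2), of "\<lambda>Y x. cov Y x"] by simp
    then have "real (\<Sum>Y\<in>C. f Y) = real (\<Sum>x\<in>U. card {Y\<in>C. cov Y x})" by simp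
    also have "\<dots> = (\<Sum>x\<in>U. real (card {Y\<in>C. cov Y x}))" by simp
    also have "\<dots> \<ge> (\<Sum>x\<in>U. d)" using less.prems(1) by (intro sum_mono) auto
    finally have s1: "d * real (card U) \<le> real (\<Sum>Y\<in>C. f Y)" by (simp add: mult.commute)
    have "(\<Sum>Y\<in>C. f Y) \<le> (\<Sum>Y\<in>C. f X)" using X by (intro sum_mono) auto
    then have "(\<Sum>Y\<in>C. f Y) \<le> card C * f X" by simp
    then have "real (\<Sum>Y\<in>C. f Y) \<le> real (card C) * real (f X)" by (simp only: of_nat_mult[symmetric] of_nat_le_iff)
    with s1 have "d * real (card U) \<le> real (card C) * real (f X)" by linarith
    then have fXr: "r * real (card U) \<le> real (f X)" using cC unfolding r_def
      by (simp add: divide_le_eq mult.commute)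
    define U' where "U' = {x\<in>U. \<not> cov X x}"
    have split: "U = {x\<in>U. cov X x} \<union> U'" "{x\<in>U. cov X x} \<inter> U' = {}" unfolding U'_def by auto
    have cU: "card U = f X + card U'" unfolding f_def
      using card_Un_disjoint[of "{x\<in>U. cov X x}" U'] split less.prems(2) by (simp add: U'_def)
    have fin': "finite U'" using less.prems(2) U'_def by simp
    have lt: "card U' < card U" using cU fX1 by simp
    have deg': "\<forall>x\<in>U'. d \<le> real (card {X\<in>C. cov X x})" using less.prems(1) U'_def by auto
    obtain T' where T': "T' \<subseteq> C" "real (card T') \<le> hh r (real (card U'))" "\<forall>x\<in>U'. \<exists>X\<in>T'. cov X x"
      using less.hyps[OF lt deg' fin'] r_def by auto
    have finT: "finite T'" using T'(1) C(1) finite_subset by auto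
    have "real (card (insert X T')) \<le> 1 + real (card T')" using card_insert_le_m1 finT
      by (simp add: card_insert_if)
    also have "\<dots> \<le> 1 + hh r (real (card U'))" using T'(2) by simp
    also have "\<dots> \<le> hh r (real (card U))"
      apply (rule hh_step[OF r])
      using cU fX1 fXr by auto
    finally have c: "real (card (insert X T')) \<le> hh r (real (card U))" .
    show ?thesis
      apply (rule exI[of _ "insert X T'"])
      using c T' X(1) unfolding r_def U'_def by auto
  qed
qed


lemma finV: "finite (V n)" and cardV: "card (V n) = n" by (auto simp: V_def)

lemma finE: "finite (E n)"
proof -
  have "E n \<subseteq> Pow (V n)" by (auto simp: E_def)
  then show ?thesis by (rule finite_subset) (simp add: finV)
qed

lemma sizeX:
  assumes X: "X \<subseteq> V n" "card X = k"
  shows "card {M. (M \<subseteq> E n \<and> is_matching M \<and> card M = k) \<and> delta n X \<inter> M = M} \<le> n ^ k"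
proof -
  define F where "F h = (\<lambda>x. {x, h x}) ` X" for h :: "nat \<Rightarrow> nat"
  have finX: "finite X" using finite_subset[OF X(1) finV] .
  have sub: "{M. (M \<subseteq> E n \<and> is_matching M \<and> card M = k) \<and> delta n X \<inter> M = M}
     \<subseteq> F ` (PiE X (\<lambda>_. V n))"
  proof
    fix M assume "M \<in> {M. (M \<subseteq> E n \<and> is_matching M \<and> card M = k) \<and> delta n X \<inter> M = M}"
    then have ME: "M \<subseteq> E n" and mat: "is_matching M" and cM: "card M = k" and Md: "M \<subseteq> delta n X"
      by auto
    define g where "g x = (SOME y. {x,y} \<in> M)" for x
    have matall: "\<forall>e\<in>M. \<forall>f\<in>M. e \<noteq> f \<longrightarrow> e \<inter> f = {}" using mat unfolding is_matching_def .
    have finM: "finite M" using finite_subset[OF ME finE] .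
    have MF: "M \<subseteq> F g"
    proof
      fix e assume e: "e \<in> M"
      have "e \<in> delta n X" using Md e by blast
      then have eE: "e \<in> E n" and c1: "card (e \<inter> X) = 1" unfolding delta_def by simp_all
      then obtain x where x: "e \<inter> X = {x}" using card_1_singletonE by blast
      have "card e = 2" using eE by (simp add: E_def)
      then obtain a b where ab: "e = {a,b}" "a \<noteq> b" by (meson card_2_iff)
      have "x \<in> e" using x by auto
      then have "e = {x, if x = a then b else a}" using ab by (cases "x = a") (auto simp: insert_commute)
      then obtain y where y: "e = {x,y}" by blast
      then have "{x,y} \<in> M" using e by simp
      then have gx: "{x, g x} \<in> M" unfolding g_def by (rule someI)
      have ne: "{x, g x} \<inter> e \<noteq> {}" using y by auto
      have eq: "{x, g x} = e"
      proof (rule ccontr)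
        assume "{x, g x} \<noteq> e"
        from matall[rule_format, OF gx e this] show False using ne by simp
      qed
      have xX: "x \<in> X" using x by auto
      show "e \<in> F g" unfolding F_def using image_eqI[where f="\<lambda>x. {x, g x}" and x=x and b=e and A=X] eq xX by simp
    qed
    have finF: "finite (F g)" unfolding F_def using finX by simp
    have "card (F g) \<le> card X" unfolding F_def using finX by (rule card_image_le)
    then have "card M = card (F g)" using card_mono[OF finF MF] cM X(2) by simp
    then have MFe: "M = F g" using card_subset_eq[OF finF MF] by simp
    have gV: "g x \<in> V n" if "x \<in> X" for x
    proof -
      have "{x, g x} \<in> F g" using that unfolding F_def by blast
      then have "{x, g x} \<in> M" using MFe by simp
      then have "{x, g x} \<subseteq> V n" using ME by (auto simp: E_def)
      then show ?thesis by simp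
    qed
    have "restrict g X \<in> PiE X (\<lambda>_. V n)" using gV by auto
    moreover have "F (restrict g X) = F g" unfolding F_def by auto
    ultimately show "M \<in> F ` (PiE X (\<lambda>_. V n))" using MFe by (metis image_eqI)
  qed
  have "card (F ` (PiE X (\<lambda>_. V n))) \<le> card (PiE X (\<lambda>_. V n))"
    using finX finV by (intro card_image_le finite_PiE) auto
  also have "\<dots> = n ^ k" using finX X(2) by (simp add: card_PiE cardV)
  finally have c2: "card (F ` (PiE X (\<lambda>_. V n))) \<le> n ^ k" .
  have "finite (F ` (PiE X (\<lambda>_. V n)))" using finX finV by (intro finite_imageI finite_PiE) auto
  from card_mono[OF this sub] c2 show ?thesis by linarith
qed

lemma same_edge:
  assumes "is_matching M" "e \<in> M" "e' \<in> M" "z \<in> e" "z \<in> e'"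
  shows "e = e'"
proof (rule ccontr)
  assume "e \<noteq> e'"
  with assms(1-3) have "e \<inter> e' = {}" unfolding is_matching_def by simp
  with assms(4,5) show False by blast
qed

lemma degM:
  assumes ME: "M \<subseteq> E n" and mat: "is_matching M" and cM: "card M = k"
  shows "2 ^ k \<le> card {X. (X \<subseteq> V n \<and> card X = k) \<and> delta n X \<inter> M = M}"
proof -
  have finM: "finite M" using finite_subset[OF ME finE] .
  define P where "P = PiE M (\<lambda>e. e)"
  have dis: "e1 \<inter> e2 = {}" if "e1 \<in> M" "e2 \<in> M" "e1 \<noteq> e2" for e1 e2
    using mat that unfolding is_matching_def by simp
  have img: "(\<lambda>f. f ` M) ` P \<subseteq> {X. (X \<subseteq> V n \<and> card X = k) \<and> delta n X \<inter> M = M}"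
  proof
    fix X assume "X \<in> (\<lambda>f. f ` M) ` P"
    then obtain f where f: "f \<in> P" and Xf: "X = f ` M" by auto
    have fe: "f e \<in> e" if "e \<in> M" for e using f that unfolding P_def by auto
    have "X \<subseteq> V n"
    proof
      fix x assume "x \<in> X"
      then obtain e where e: "e \<in> M" "x = f e" using Xf by auto
      then have "e \<subseteq> V n" using ME by (auto simp: E_def)
      then show "x \<in> V n" using fe e by auto
    qed
    moreover have "inj_on f M"
    proof (rule inj_onI)
      fix e1 e2 assume a: "e1 \<in> M" "e2 \<in> M" "f e1 = f e2"
      have "f e1 \<in> e1" using fe a(1) .
      moreover have "f e1 \<in> e2" using fe[OF a(2)] a(3) by simp
      ultimately show "e1 = e2" using same_edge[OF mat a(1) a(2)] by blast
    qed
    then have "card X = k" using Xf cM by (simp add: card_image)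
    moreover have "M \<subseteq> delta n X"
    proof
      fix e assume e: "e \<in> M"
      have "e \<inter> X = {f e}"
      proof
        show "{f e} \<subseteq> e \<inter> X" using e fe Xf by auto
        show "e \<inter> X \<subseteq> {f e}"
        proof
          fix y assume "y \<in> e \<inter> X"
          then obtain e' where "e' \<in> M" "y = f e'" "y \<in> e" using Xf by auto
          then have "e' = e" using same_edge[OF mat e, of e' y] fe by simp
          then show "y \<in> {f e}" using \<open>y = f e'\<close> by simp
        qed
      qed
      then show "e \<in> delta n X" using e ME by (auto simp: delta_def)
    qed
    ultimately show "X \<in> {X. (X \<subseteq> V n \<and> card X = k) \<and> delta n X \<inter> M = M}" by auto
  qed
  have inj: "inj_on (\<lambda>f. f ` M) P"
  proof (rule inj_onI)
    fix f g assume f: "f \<in> P" and g: "g \<in> P" and eq: "f ` M = g ` M"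
    have fe: "f e \<in> e" "g e \<in> e" if "e \<in> M" for e using f g that unfolding P_def by auto
    show "f = g" using f g unfolding P_def
    proof (rule PiE_ext)
      fix e assume e: "e \<in> M"
      then have "f e \<in> g ` M" using eq by auto
      then obtain e' where e': "e' \<in> M" "f e = g e'" by auto
      have "f e \<in> e" using fe(1)[OF e] .
      moreover have "f e \<in> e'" using fe(2)[OF e'(1)] e'(2) by simp
      ultimately have "e = e'" using same_edge[OF mat e e'(1)] by blast
      then have "e' = e" by simp
      then show "f e = g e" using \<open>f e = g e'\<close> by simp
    qed
  qed
  have cardP: "card P = 2 ^ k"
  proof -
    have "card P = (\<Prod>e\<in>M. card e)" unfolding P_def using finM by (simp add: card_PiE)
    also have "\<dots> = (\<Prod>e\<in>M. 2)" using ME by (intro prod.cong) (auto simp: E_def)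
    finally show ?thesis using cM by simp
  qed
  have finS: "finite {X. (X \<subseteq> V n \<and> card X = k) \<and> delta n X \<inter> M = M}"
    by (rule finite_subset[of _ "Pow (V n)"]) (auto simp: finV)
  have "card ((\<lambda>f. f ` M) ` P) = 2 ^ k" using card_image[OF inj] cardP by simp
  then show ?thesis using card_mono[OF finS img] by simp
qed


theorem corollary1:
  fixes n k :: nat
  assumes "n \<ge> 2" and "1 \<le> k" and "k \<le> n div 2"
  shows "\<exists>T :: nat set set.
           (\<forall>X\<in>T. X \<subseteq> V n \<and> card X = k) \<and>
           real (card T) \<le> (1 + real k * ln (real n)) * 2 powi (- int k) * real (n choose k) \<and>
           (\<forall>M. M \<subseteq> E n \<and> is_matching M \<and> card M = k \<longrightarrow>
                (\<exists>X\<in>T. delta n X \<inter> M = M))"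
proof -
  define C where "C = {X. X \<subseteq> V n \<and> card X = k}"
  define Mat where "Mat = {M. M \<subseteq> E n \<and> is_matching M \<and> card M = k}"
  define cov where "cov X M = (delta n X \<inter> M = M)" for X M
  define D :: real where "D = 2 ^ k"
  define m :: real where "m = real (n choose k)"
  have kn: "k \<le> n" using assms by simp
  have finC: "finite C" unfolding C_def by (rule finite_subset[of _ "Pow (V n)"]) (auto simp: finV)
  have cardC: "card C = n choose k" unfolding C_def using n_subsets[OF finV, of n k] by (simp add: cardV)
  have m0: "m > 0" unfolding m_def using kn by (simp add: zero_less_binomial)
  have CnE: "C \<noteq> {}" using cardC m0 m_def by auto
  have D0: "D > 0" unfolding D_def by simp
  have finMat: "finite Mat" unfolding Mat_def by (rule finite_subset[of _ "Pow (E n)"]) (auto simp: finE)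
  have deg: "\<forall>M\<in>Mat. D \<le> real (card {X\<in>C. cov X M})"
  proof
    fix M assume "M \<in> Mat"
    then have "M \<subseteq> E n" "is_matching M" "card M = k" unfolding Mat_def by auto
    from degM[OF this] have "2 ^ k \<le> card {X\<in>C. cov X M}" unfolding C_def cov_def by simp
    then show "D \<le> real (card {X\<in>C. cov X M})" unfolding D_def
      by (metis of_nat_le_iff of_nat_numeral of_nat_power)
  qed
  obtain T where T: "T \<subseteq> C" "real (card T) \<le> hh (D / real (card C)) (real (card Mat))"
      "\<forall>M\<in>Mat. \<exists>X\<in>T. cov X M"
    using cover[OF finC CnE D0 deg finMat] by blast
  define r where "r = D / m"
  have r0: "r > 0" using D0 m0 r_def by simp
  define N where "N = real (card Mat)"
  have hT: "real (card T) \<le> hh r N" using T(2) unfolding r_def N_def m_def cardC .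
  have sizes: "\<forall>X\<in>C. card {M\<in>Mat. cov X M} \<le> n ^ k"
  proof
    fix X assume "X \<in> C"
    then have "X \<subseteq> V n" "card X = k" unfolding C_def by auto
    from sizeX[OF this] show "card {M\<in>Mat. cov X M} \<le> n ^ k" unfolding Mat_def cov_def by simp
  qed
  have "D * N = (\<Sum>M\<in>Mat. D)" unfolding N_def by simp
  also have "\<dots> \<le> (\<Sum>M\<in>Mat. real (card {X\<in>C. cov X M}))" using deg by (intro sum_mono) auto
  also have "\<dots> = real (\<Sum>M\<in>Mat. card {X\<in>C. cov X M})" by simp
  also have "(\<Sum>M\<in>Mat. card {X\<in>C. cov X M}) = (\<Sum>X\<in>C. card {M\<in>Mat. cov X M})"
    using card_swap[OF finMat finC, of "\<lambda>M X. cov X M"] by simp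
  also have "real (\<Sum>X\<in>C. card {M\<in>Mat. cov X M}) \<le> real (\<Sum>X\<in>C. n ^ k)"
    using sizes by (simp only: of_nat_le_iff) (intro sum_mono, auto)
  also have "\<dots> = m * real n ^ k" unfolding m_def cardC[symmetric] by simp
  finally have DN: "D * N \<le> m * real n ^ k" .
  have rN: "r * N \<le> real n ^ k" using DN m0 unfolding r_def by (simp add: field_simps)
  have lnn: "0 \<le> real k * ln (real n)" using assms by simp
  have rhs: "(1 + real k * ln (real n)) * 2 powi (- int k) * m = (1 + real k * ln (real n)) / r"
    unfolding r_def D_def by (simp add: power_int_minus power_int_of_nat field_simps)
  have "hh r N \<le> (1 + real k * ln (real n)) / r"
  proof (cases "N \<le> 1/r")
    case True
    then have "hh r N = N" by (simp add: hh_def)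
    also have "N \<le> 1 / r" using True .
    also have "\<dots> \<le> (1 + real k * ln (real n)) / r" using r0 lnn by (simp add: divide_right_mono)
    finally show ?thesis .
  next
    case False
    then have "1/r < N" by simp
    then have rN1: "r * N > 1" using r0 by (simp add: divide_less_eq mult.commute)
    have "ln (r * N) \<le> ln (real n ^ k)" using rN rN1 by (intro ln_mono) auto
    also have "\<dots> = real k * ln (real n)" by (simp add: ln_realpow)
    finally have "1 + ln (r*N) \<le> 1 + real k * ln (real n)" by simp
    then have "(1 + ln (r*N)) / r \<le> (1 + real k * ln (real n)) / r" using r0 by (simp add: divide_right_mono)
    then show ?thesis using False by (simp add: hh_def)
  qed
  then have cardT: "real (card T) \<le> (1 + real k * ln (real n)) * 2 powi (- int k) * real (n choose k)"
    using hT rhs m_def by simp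
  show ?thesis
  proof (intro exI[of _ T] conjI)
    show "\<forall>X\<in>T. X \<subseteq> V n \<and> card X = k" using T(1) unfolding C_def by auto
    show "real (card T) \<le> (1 + real k * ln (real n)) * 2 powi (- int k) * real (n choose k)" by (rule cardT)
    show "\<forall>M. M \<subseteq> E n \<and> is_matching M \<and> card M = k \<longrightarrow> (\<exists>X\<in>T. delta n X \<inter> M = M)"
      using T(3) unfolding Mat_def cov_def by auto
  qed
qed

end
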